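(* Let $\lambda>0$ and $\theta\in(0,\pi/2)$. For each $m>0$ set $n=m\tan\theta$, $X=(\lambda,0)$, $Y=(0,0)$, $Z=(m,n)$, and let $\varphi_m(\alpha,\beta)=\frac12(\alpha^2+2b\alpha\beta+a\beta^2)+c\alpha+d\beta$ be the conic satisfying (P1) $\varphi_m(X)=\varphi_m(Y)=\varphi_m(Z)=0$ and (P2) $Y-X$ is a positive multiple of $-\nabla\varphi_m(X)$ and $Z-Y$ is a positive multiple of $-\nabla\varphi_m(Y)$. Call $\{\varphi_m=0\}$ admissible if it is an ellipse. Then the set of centers $(u,v)$ of all admissible ellipses is contained in the line $u=\frac{\lambda}{2}-\frac{\tan\theta}{2}\,v$.
   Context: The center of an ellipse $\{\varphi=0\}$ is the point where $\nabla\varphi=0$. *)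

theory Defs
  imports "HOL-Analysis.Analysis"
begin

definition conic :: "real \<Rightarrow> real \<Rightarrow> real \<Rightarrow> real \<Rightarrow> real \<times> real \<Rightarrow> real" where
  "conic a b c d p = (let (x, y) = p in (x^2 + 2*b*x*y + a*y^2) / 2 + c*x + d*y)"

definition conic_grad :: "real \<Rightarrow> real \<Rightarrow> real \<Rightarrow> real \<Rightarrow> real \<times> real \<Rightarrow> real \<times> real" where
  "conic_grad a b c d p = (let (x, y) = p in (x + b*y + c, b*x + a*y + d))"

definition is_ellipse :: "(real \<times> real) set \<Rightarrow> bool" where
  "is_ellipse S \<longleftrightarrow> (\<exists>x0 y0 A B C. A > 0 \<and> A*C - B^2 > 0 \<and>
      S = {(x, y). A*(x-x0)^2 + 2*B*(x-x0)*(y-y0) + C*(y-y0)^2 = 1})"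

definition conic_conditions :: "real \<Rightarrow> real \<Rightarrow> real \<Rightarrow> real \<Rightarrow> real \<Rightarrow> real \<Rightarrow> real \<Rightarrow> bool" where
  "conic_conditions lam \<theta> m a b c d \<longleftrightarrow>
    (let n = m * tan \<theta>; X = (lam, 0::real); Y = (0::real, 0::real); Z = (m, n) in
      conic a b c d X = 0 \<and> conic a b c d Y = 0 \<and> conic a b c d Z = 0 \<and>
      (\<exists>t>0. Y - X = t *\<^sub>R (- conic_grad a b c d X)) \<and>
      (\<exists>t>0. Z - Y = t *\<^sub>R (- conic_grad a b c d Y)))"

definition admissible :: "real \<Rightarrow> real \<Rightarrow> real \<Rightarrow> real \<Rightarrow> real \<Rightarrow> real \<Rightarrow> real \<Rightarrow> bool" where
  "admissible lam \<theta> m a b c d \<longleftrightarrow>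
     conic_conditions lam \<theta> m a b c d \<and> is_ellipse {p. conic a b c d p = 0}"

end

theory Submission
  imports Defs
begin

theorem proposition4:
  fixes lam \<theta> :: real
  assumes "lam > 0" and "0 < \<theta>" and "\<theta> < pi / 2"
  shows "{(u, v). \<exists>m a b c d. m > 0 \<and> admissible lam \<theta> m a b c d \<and>
                  conic_grad a b c d (u, v) = (0, 0)}
         \<subseteq> {(u, v). u = lam / 2 - tan \<theta> / 2 * v}"
proof clarify
  fix u v m a b c d
  assume m: "m > 0" and adm: "admissible lam \<theta> m a b c d"
    and g: "conic_grad a b c d (u, v) = (0, 0)"
  have cX: "lam^2/2 + c*lam = 0" using adm
    by (simp add: admissible_def conic_conditions_def conic_def Let_def)
  have cc: "c = - lam/2"
  proof -
    have "lam * (lam/2 + c) = 0" using cX by (simp add: algebra_simps power2_eq_square)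
    then show ?thesis using assms(1) by simp
  qed
  have ex1: "\<exists>t>0. (0::real, 0::real) - (lam, 0) = t *\<^sub>R (- conic_grad a b c d (lam, 0))"
   and ex2: "\<exists>t>0. (m, m * tan \<theta>) - (0, 0) = t *\<^sub>R (- conic_grad a b c d (0, 0))"
    using adm unfolding admissible_def conic_conditions_def Let_def by auto
  obtain t1 where t1: "t1 > 0" "(- lam, 0) = t1 *\<^sub>R (- (lam + c, b*lam + d))" using ex1
    by (auto simp add: conic_grad_def)
  obtain t2 where t2: "t2 > 0" "(m, m * tan \<theta>) = t2 *\<^sub>R (- (c, d))" using ex2
    by (auto simp add: conic_grad_def)
  have "t1 * (b*lam + d) = 0" using t1(2) by (auto simp: algebra_simps)
  hence dd: "d = - b*lam" using t1(1) by (simp add: add_eq_0_iff2)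
  have e1: "m = t2 * (lam/2)" and e2: "m * tan \<theta> = t2 * (b*lam)"
    using t2(2) cc dd by auto
  hence "m * tan \<theta> = m * (2*b)" by (simp add: algebra_simps)
  hence bb: "b = tan \<theta> / 2" using m by simp
  have "u + b * v + c = (0::real)" using g by (simp add: conic_grad_def)
  thus "u = lam / 2 - tan \<theta> / 2 * v" using bb cc by simp
qed

end
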